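(* Let $\{w^k\}$ be generated by Algorithm 2 (running infinitely) and suppose $\varepsilon^k\to0$. Then each accumulation point $\bar w$ of $\{w^k\}$ that is feasible for (P) and AM-regular is an M-stationary point of (P), i.e., there is $\lambda\in\mathbb Y$ with $0\in\nabla f(\bar w)+G'(\bar w)^*\lambda+\mathcal N^{\lim}_D(\bar w)$ and $\lambda\in\mathcal N_C(G(\bar w))$.
   Context: Standing setting: $\mathbb W,\mathbb Y$ Euclidean spaces; (P) is $\min f(w)$ s.t. $G(w)\in C$, $w\in D$, with $f\colon\mathbb W\to\mathbb R$, $G\colon\mathbb W\to\mathbb Y$ continuously differentiable, $C\subset\mathbb Y$ nonempty closed convex, $D\subset\mathbb W$ nonempty closed. $P_C$ is the Euclidean projection onto $C$, $d_C(y)=\|y-P_C(y)\|$, $\mathcal N_C$ the convex normal cone ($\varnothing$ outside $C$); $\mathcal N^{\lim}_D(\bar w):=\limsup_{w\to\bar w}\operatorname{cone}(w-\Pi_D(w))$ for $\bar w\in D$ ($\Pi_D$ multivalued projection, outer set limit), $\varnothing$ for $\bar w\notin D$. A feasible $\bar w$ is AM-regular if $\limsup_{w\to\bar w,\,z\to0}\mathcal M(w,z)\subset\mathcal M(\bar w,0)$ with $\mathcal M(w,z):=G'(w)^*\mathcal N_C(G(w)-z)+\mathcal N^{\lim}_D(w)$. Augmented Lagrangian $\mathcal L_\rho(w,\lambda):=f(w)+\frac\rho2 d_C^2(G(w)+\lambda/\rho)$; $V_\rho(w,u):=\|G(w)-P_C(G(w)+u/\rho)\|$. Algorithm 2: data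 $\rho_0>0$, $\beta>1$, $\eta\in(0,1)$, $w^0\in D$, a nonempty bounded set $U\subset\mathbb Y$. For $k=0,1,\dots$: choose $u^k\in U$; compute $w^{k+1}$ and $\varepsilon^{k+1}\in\mathbb W$ with $\varepsilon^{k+1}\in\nabla_w\mathcal L_{\rho_k}(w^{k+1},u^k)+\mathcal N^{\lim}_D(w^{k+1})$; set $\lambda^{k+1}:=\rho_k[G(w^{k+1})+u^k/\rho_k-P_C(G(w^{k+1})+u^k/\rho_k)]$; if $k=0$ or $V_{\rho_k}(w^{k+1},u^k)\le\eta V_{\rho_{k-1}}(w^k,u^{k-1})$ set $\rho_{k+1}:=\rho_k$, else $\rho_{k+1}:=\beta\rho_k$. *)

theory Defs
  imports "HOL-Analysis.Analysis"
begin

definition normal_cone_cvx :: "'a::real_inner set \<Rightarrow> 'a \<Rightarrow> 'a set" where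
  "normal_cone_cvx C y = (if y \<in> C then {v. \<forall>c\<in>C. inner v (c - y) \<le> 0} else {})"

definition proj_set :: "'a::real_inner set \<Rightarrow> 'a \<Rightarrow> 'a set" where
  "proj_set D w = {p \<in> D. dist w p = infdist w D}"

definition prox_cone :: "'a::real_inner set \<Rightarrow> 'a \<Rightarrow> 'a set" where
  "prox_cone D w = {c *\<^sub>R (w - p) | c p. c \<ge> 0 \<and> p \<in> proj_set D w}"

definition lim_normal_cone :: "'a::real_inner set \<Rightarrow> 'a \<Rightarrow> 'a set" where
  "lim_normal_cone D wb = (if wb \<in> D then
     {v. \<exists>ws vs. ws \<longlonglongrightarrow> wb \<and> vs \<longlonglongrightarrow> v \<and> (\<forall>k. vs k \<in> prox_cone D (ws k))}
   else {})"

definition AM_map ::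
  "('w::euclidean_space \<Rightarrow> 'y::euclidean_space) \<Rightarrow> ('w \<Rightarrow> 'w \<Rightarrow>\<^sub>L 'y) \<Rightarrow> 'y set \<Rightarrow> 'w set
    \<Rightarrow> 'w \<Rightarrow> 'y \<Rightarrow> 'w set" where
  "AM_map G DG C D w z =
     {adjoint (blinfun_apply (DG w)) l + v | l v. l \<in> normal_cone_cvx C (G w - z) \<and> v \<in> lim_normal_cone D w}"

definition AM_regular ::
  "('w::euclidean_space \<Rightarrow> 'y::euclidean_space) \<Rightarrow> ('w \<Rightarrow> 'w \<Rightarrow>\<^sub>L 'y) \<Rightarrow> 'y set \<Rightarrow> 'w set
    \<Rightarrow> 'w \<Rightarrow> bool" where
  "AM_regular G DG C D wb \<longleftrightarrow>
     (\<forall>ws zs xs x. ws \<longlonglongrightarrow> wb \<and> zs \<longlonglongrightarrow> 0 \<and> xs \<longlonglongrightarrow> x \<and> (\<forall>k. xs k \<in> AM_map G DG C D (ws k) (zs k))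
        \<longrightarrow> x \<in> AM_map G DG C D wb 0)"

definition aug_lag ::
  "('w \<Rightarrow> real) \<Rightarrow> ('w \<Rightarrow> 'y::euclidean_space) \<Rightarrow> 'y set \<Rightarrow> real \<Rightarrow> 'w \<Rightarrow> 'y \<Rightarrow> real" where
  "aug_lag f G C \<rho> w l = f w + \<rho> / 2 * (infdist (G w + (1/\<rho>) *\<^sub>R l) C)\<^sup>2"

definition V_fun :: "('w \<Rightarrow> 'y::euclidean_space) \<Rightarrow> 'y set \<Rightarrow> real \<Rightarrow> 'w \<Rightarrow> 'y \<Rightarrow> real" where
  "V_fun G C \<rho> w u = norm (G w - closest_point C (G w + (1/\<rho>) *\<^sub>R u))"

end

theory Submission imports Defs begin

lemma infdist_cp:
  fixes C :: "'y::euclidean_space set"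
  assumes "closed C" "C \<noteq> {}"
  shows "infdist y C = dist y (closest_point C y)"
proof -
  obtain c where c: "c \<in> C" "infdist y C = dist y c"
    using infdist_attains_inf[OF assms] by blast
  have "dist y (closest_point C y) \<le> dist y c" using closest_point_le[OF assms(1) c(1)] .
  moreover have "infdist y C \<le> dist y (closest_point C y)"
    by (rule infdist_le, rule closest_point_in_set[OF assms])
  ultimately show ?thesis using c by linarith
qed

lemma dsq_bound:
  fixes C :: "'y::euclidean_space set"
  assumes cv: "convex C" and cl: "closed C" and ne: "C \<noteq> {}"
  shows "\<bar>(infdist (y + h) C)\<^sup>2 - (infdist y C)\<^sup>2 - 2 * inner (y - closest_point C y) h\<bar> \<le> (norm h)\<^sup>2"
proof -
  define p where "p = closest_point C y"
  define q where "q = closest_point C (y + h)"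
  have pC: "p \<in> C" "q \<in> C" unfolding p_def q_def using closest_point_in_set[OF cl ne] by auto
  have e1: "(infdist y C)\<^sup>2 = (norm (y - p))\<^sup>2" using infdist_cp[OF cl ne] by (simp add: p_def dist_norm)
  have e2: "(infdist (y+h) C)\<^sup>2 = (norm (y + h - q))\<^sup>2" using infdist_cp[OF cl ne] by (simp add: q_def dist_norm)
  have u1: "norm (y + h - q) \<le> norm (y + h - p)"
    using closest_point_le[OF cl pC(1), of "y+h"] by (simp add: q_def dist_norm)
  have u2: "norm (y - p) \<le> norm (y - q)"
    using closest_point_le[OF cl pC(2), of "y"] by (simp add: p_def dist_norm)
  have lip: "norm (q - p) \<le> norm h"
    using closest_point_lipschitz[OF cv cl ne, of "y+h" y] by (simp add: p_def q_def dist_norm)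
  have s1: "(norm (y + h - q))\<^sup>2 \<le> (norm (y + h - p))\<^sup>2" using u1 by (simp add: power_mono)
  have s2: "(norm (y - p))\<^sup>2 \<le> (norm (y - q))\<^sup>2" using u2 by (simp add: power_mono)
  have a1: "(norm (y + h - p))\<^sup>2 = (norm (y - p))\<^sup>2 + 2 * inner (y - p) h + (norm h)\<^sup>2"
    by (simp add: power2_norm_eq_inner algebra_simps inner_commute)
  have a2: "(norm (y - q))\<^sup>2 = (norm (y + h - q))\<^sup>2 - 2 * inner (y + h - q) h + (norm h)\<^sup>2"
    by (simp add: power2_norm_eq_inner algebra_simps inner_commute)
  have a3: "inner (y + h - q) h - inner (y - p) h = (norm h)\<^sup>2 - inner (q - p) h"
    by (simp add: power2_norm_eq_inner algebra_simps inner_commute)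
  have cs: "\<bar>inner (q - p) h\<bar> \<le> (norm h)\<^sup>2"
    using Cauchy_Schwarz_ineq2[of "q-p" h] lip
    by (smt (verit) mult_right_mono norm_ge_zero power2_eq_square)
  show ?thesis unfolding e1 e2 p_def[symmetric]
    using s1 s2 a1 a2 a3 cs by (simp add: abs_le_iff)
qed

lemma dsq_deriv:
  fixes C :: "'y::euclidean_space set"
  assumes cv: "convex C" and cl: "closed C" and ne: "C \<noteq> {}"
  shows "((\<lambda>y. (infdist y C)\<^sup>2) has_derivative (\<lambda>h. 2 * inner (y - closest_point C y) h)) (at y)"
  unfolding has_derivative_at_alt
proof (intro conjI allI impI)
  show "bounded_linear (\<lambda>h. 2 * inner (y - closest_point C y) h)"
    by (intro bounded_linear_const_mult bounded_linear_inner_right)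
  fix e :: real assume e: "e > 0"
  show "\<exists>d>0. \<forall>x. norm (x - y) < d \<longrightarrow>
          norm ((infdist x C)\<^sup>2 - (infdist y C)\<^sup>2 - 2 * inner (y - closest_point C y) (x - y)) \<le> e * norm (x - y)"
  proof (intro exI[of _ e] conjI allI impI e)
    fix x assume x: "norm (x - y) < e"
    have "\<bar>(infdist (y + (x - y)) C)\<^sup>2 - (infdist y C)\<^sup>2 - 2 * inner (y - closest_point C y) (x - y)\<bar> \<le> (norm (x-y))\<^sup>2"
      by (rule dsq_bound[OF cv cl ne])
    moreover have "(norm (x-y))\<^sup>2 \<le> e * norm (x - y)" using x
      by (simp add: power2_eq_square mult_right_mono)
    ultimately show "norm ((infdist x C)\<^sup>2 - (infdist y C)\<^sup>2 - 2 * inner (y - closest_point C y) (x - y)) \<le> e * norm (x - y)"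
      by simp
  qed
qed

lemma aug_deriv:
  fixes f :: "'w::euclidean_space \<Rightarrow> real" and G :: "'w \<Rightarrow> 'y::euclidean_space"
  assumes f_deriv: "(f has_derivative (\<lambda>h. inner (Df x) h)) (at x)"
    and G_deriv: "(G has_derivative blinfun_apply (DG x)) (at x)"
    and cv: "convex C" and cl: "closed C" and ne: "C \<noteq> {}"
  shows "((\<lambda>x. aug_lag f G C \<rho> x u) has_derivative (\<lambda>h. inner (Df x + adjoint (blinfun_apply (DG x))
           (\<rho> *\<^sub>R (G x + (1/\<rho>) *\<^sub>R u - closest_point C (G x + (1/\<rho>) *\<^sub>R u)))) h)) (at x)"
proof -
  define y where "y = G x + (1/\<rho>) *\<^sub>R u"
  have g1: "((\<lambda>x. G x + (1/\<rho>) *\<^sub>R u) has_derivative blinfun_apply (DG x)) (at x)"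
    using G_deriv by (rule has_derivative_add_const)
  have g2: "((\<lambda>x. (infdist (G x + (1/\<rho>) *\<^sub>R u) C)\<^sup>2) has_derivative
       (\<lambda>h. 2 * inner (y - closest_point C y) (blinfun_apply (DG x) h))) (at x)"
    using has_derivative_compose[OF g1 dsq_deriv[OF cv cl ne, of "G x + (1/\<rho>) *\<^sub>R u"]] unfolding y_def .
  have g3: "((\<lambda>x. aug_lag f G C \<rho> x u) has_derivative
       (\<lambda>h. inner (Df x) h + \<rho> / 2 * (2 * inner (y - closest_point C y) (blinfun_apply (DG x) h)))) (at x)"
    unfolding aug_lag_def
    by (intro has_derivative_add f_deriv has_derivative_mult_right g2)
  have lin: "linear (blinfun_apply (DG x))"
    by (simp add: bounded_linear.linear blinfun.bounded_linear_right)
  have eq: "(\<lambda>h. inner (Df x) h + \<rho> / 2 * (2 * inner (y - closest_point C y) (blinfun_apply (DG x) h)))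
      = (\<lambda>h. inner (Df x + adjoint (blinfun_apply (DG x)) (\<rho> *\<^sub>R (y - closest_point C y))) h)"
  proof
    fix h
    have "inner (adjoint (blinfun_apply (DG x)) (\<rho> *\<^sub>R (y - closest_point C y))) h
        = inner (blinfun_apply (DG x) h) (\<rho> *\<^sub>R (y - closest_point C y))"
      using adjoint_works[OF lin, of h] by (simp add: inner_commute)
    then show "inner (Df x) h + \<rho> / 2 * (2 * inner (y - closest_point C y) (blinfun_apply (DG x) h))
      = inner (Df x + adjoint (blinfun_apply (DG x)) (\<rho> *\<^sub>R (y - closest_point C y))) h"
      by (simp add: inner_add_right inner_commute)
  qed
  show ?thesis using g3[unfolded eq] by (simp add: y_def)
qed

theorem mainTheorem10:
  fixes f :: "'w::euclidean_space \<Rightarrow> real"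
    and Df :: "'w \<Rightarrow> 'w"
    and G :: "'w \<Rightarrow> 'y::euclidean_space"
    and DG :: "'w \<Rightarrow> 'w \<Rightarrow>\<^sub>L 'y"
    and C :: "'y set" and D :: "'w set"
    and \<rho>0 \<beta> \<eta> :: real and U :: "'y set"
    and w eps :: "nat \<Rightarrow> 'w" and u lam :: "nat \<Rightarrow> 'y" and \<rho> :: "nat \<Rightarrow> real"
    and wb :: 'w
  assumes f_deriv: "\<And>x. (f has_derivative (\<lambda>h. inner (Df x) h)) (at x)"
    and Df_cont: "continuous_on UNIV Df"
    and G_deriv: "\<And>x. (G has_derivative blinfun_apply (DG x)) (at x)"
    and DG_cont: "continuous_on UNIV DG"
    and C_ne: "C \<noteq> {}" and C_closed: "closed C" and C_convex: "convex C"
    and D_ne: "D \<noteq> {}" and D_closed: "closed D"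
    and rho0_pos: "\<rho>0 > 0" and beta_gt: "\<beta> > 1" and eta_pos: "0 < \<eta>" and eta_lt: "\<eta> < 1"
    and w0: "w 0 \<in> D"
    and U_ne: "U \<noteq> {}" and U_bdd: "bounded U"
    and rho_init: "\<rho> 0 = \<rho>0"
    and u_in: "\<And>k. u k \<in> U"
    and eps_step: "\<And>k. \<exists>g. ((\<lambda>x. aug_lag f G C (\<rho> k) x (u k)) has_derivative (\<lambda>h. inner g h)) (at (w (Suc k)))
                       \<and> eps (Suc k) \<in> (\<lambda>v. g + v) ` lim_normal_cone D (w (Suc k))"
    and lam_def: "\<And>k. lam (Suc k) = \<rho> k *\<^sub>R (G (w (Suc k)) + (1 / \<rho> k) *\<^sub>R u k
                      - closest_point C (G (w (Suc k)) + (1 / \<rho> k) *\<^sub>R u k))"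
    and rho_update: "\<And>k. \<rho> (Suc k) =
          (if k = 0 \<or> V_fun G C (\<rho> k) (w (Suc k)) (u k) \<le> \<eta> * V_fun G C (\<rho> (k - 1)) (w k) (u (k - 1))
           then \<rho> k else \<beta> * \<rho> k)"
    and eps_lim: "eps \<longlonglongrightarrow> 0"
    and accum: "\<exists>r. strict_mono r \<and> (w \<circ> r) \<longlonglongrightarrow> wb"
    and feas: "G wb \<in> C" "wb \<in> D"
    and AMreg: "AM_regular G DG C D wb"
  shows "\<exists>l. 0 \<in> (\<lambda>v. Df wb + adjoint (blinfun_apply (DG wb)) l + v) ` lim_normal_cone D wb
             \<and> l \<in> normal_cone_cvx C (G wb)"
proof -
  have rho_pos: "\<rho> k > 0" for k
  proof (induction k)
    case 0 then show ?case using rho_init rho0_pos by simp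
  next
    case (Suc k) then show ?case using rho_update[of k] beta_gt by auto
  qed
  have rho_mono: "\<rho> k \<le> \<rho> (Suc k)" for k
    using rho_update[of k] beta_gt rho_pos[of k] by auto
  have rho_inc: "incseq \<rho>" using rho_mono by (rule incseq_SucI)
  define z where "z k = G (w (Suc k)) - closest_point C (G (w (Suc k)) + (1 / \<rho> k) *\<^sub>R u k)" for k
  have inM: "eps (Suc k) - Df (w (Suc k)) \<in> AM_map G DG C D (w (Suc k)) (z k)" for k
  proof -
    obtain g where g: "((\<lambda>x. aug_lag f G C (\<rho> k) x (u k)) has_derivative (\<lambda>h. inner g h)) (at (w (Suc k)))"
      and ge: "eps (Suc k) \<in> (\<lambda>v. g + v) ` lim_normal_cone D (w (Suc k))"
      using eps_step[of k] by blast
    define x where "x = w (Suc k)"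
    define y where "y = G x + (1 / \<rho> k) *\<^sub>R u k"
    have d2: "((\<lambda>x. aug_lag f G C (\<rho> k) x (u k)) has_derivative (\<lambda>h. inner (Df x + adjoint (blinfun_apply (DG x))
           (lam (Suc k))) h)) (at x)"
      using aug_deriv[OF f_deriv G_deriv C_convex C_closed C_ne, where x=x and \<rho>="\<rho> k" and u="u k"] lam_def[of k]
      unfolding x_def by simp
    have "(\<lambda>h. inner g h) = (\<lambda>h. inner (Df x + adjoint (blinfun_apply (DG x)) (lam (Suc k))) h)"
      using has_derivative_unique[OF g[folded x_def] d2] .
    from fun_cong[OF this, of "g - (Df x + adjoint (blinfun_apply (DG x)) (lam (Suc k)))"]
    have "inner g (g - (Df x + adjoint (blinfun_apply (DG x)) (lam (Suc k)))) =
               inner (Df x + adjoint (blinfun_apply (DG x)) (lam (Suc k))) (g - (Df x + adjoint (blinfun_apply (DG x)) (lam (Suc k))))"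
      by simp
    then have "inner (g - (Df x + adjoint (blinfun_apply (DG x)) (lam (Suc k)))) (g - (Df x + adjoint (blinfun_apply (DG x)) (lam (Suc k)))) = 0"
      by (simp add: inner_diff_left)
    then have geq: "g = Df x + adjoint (blinfun_apply (DG x)) (lam (Suc k))" by simp
    obtain v where v: "v \<in> lim_normal_cone D x" "eps (Suc k) = g + v" using ge x_def by auto
    have lamN: "lam (Suc k) \<in> normal_cone_cvx C (G x - z k)"
    proof -
      have e: "G x - z k = closest_point C y" by (simp add: z_def x_def y_def)
      have lamy: "lam (Suc k) = \<rho> k *\<^sub>R (y - closest_point C y)" using lam_def[of k] by (simp add: x_def y_def)
      have "inner (lam (Suc k)) (c - closest_point C y) \<le> 0" if "c \<in> C" for c
        using closest_point_dot[OF C_convex C_closed that, of y] rho_pos[of k] unfolding lamy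
        by (simp add: mult_nonneg_nonpos less_imp_le)
      then show ?thesis unfolding e normal_cone_cvx_def using closest_point_in_set[OF C_closed C_ne] by auto
    qed
    have "eps (Suc k) - Df x = adjoint (blinfun_apply (DG x)) (lam (Suc k)) + v" using v geq by simp
    then show ?thesis unfolding AM_map_def x_def[symmetric] using lamN v(1) by blast
  qed
  obtain r where r: "strict_mono r" "(w \<circ> r) \<longlonglongrightarrow> wb" using accum by blast
  define s where "s j = r (Suc j) - 1" for j
  have r1: "r (Suc j) \<ge> 1" for j using strict_mono_less[OF r(1), of 0 "Suc j"] by simp
  have sS: "Suc (s j) = r (Suc j)" for j using r1[of j] by (simp add: s_def)
  have s_mono: "strict_mono s"
    unfolding strict_mono_Suc_iff
  proof
    fix j show "s j < s (Suc j)" using strict_mono_less[OF r(1), of "Suc j" "Suc (Suc j)"] sS[of j] sS[of "Suc j"] by simp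
  qed
  have ws: "(\<lambda>j. w (Suc (s j))) \<longlonglongrightarrow> wb"
    using LIMSEQ_Suc[OF r(2)] by (simp add: sS comp_def)
  have epss: "(\<lambda>j. eps (Suc (s j))) \<longlonglongrightarrow> 0"
    using LIMSEQ_Suc[OF LIMSEQ_subseq_LIMSEQ[OF eps_lim r(1)]] by (simp add: sS comp_def)
  have Dfs: "(\<lambda>j. Df (w (Suc (s j)))) \<longlonglongrightarrow> Df wb"
    using continuous_on_tendsto_compose[OF Df_cont ws] by simp
  have zs: "(\<lambda>j. z (s j)) \<longlonglongrightarrow> 0"
  proof -
    define a where "a k = V_fun G C (\<rho> k) (w (Suc k)) (u k)" for k
    have az: "a k = norm (z k)" for k by (simp add: a_def z_def V_fun_def)
    show ?thesis
    proof (cases "\<exists>N. \<forall>k\<ge>N. k = 0 \<or> a k \<le> \<eta> * a (k - 1)")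
      case True
      then obtain N where N: "\<And>k. k \<ge> N \<Longrightarrow> k = 0 \<or> a k \<le> \<eta> * a (k - 1)" by blast
      define M where "M = Suc N"
      have geo: "a (M + n) \<le> \<eta> ^ n * a M" for n
      proof (induction n)
        case 0 then show ?case by simp
      next
        case (Suc n)
        have "a (M + Suc n) \<le> \<eta> * a (M + n)" using N[of "M + Suc n"] by (simp add: M_def)
        also have "\<dots> \<le> \<eta> * (\<eta> ^ n * a M)" using Suc eta_pos by simp
        finally show ?case by simp
      qed
      have "(\<lambda>n. \<eta> ^ n * a M) \<longlonglongrightarrow> 0"
        using LIMSEQ_power_zero[of \<eta>] eta_pos eta_lt by (intro tendsto_mult_left_zero) simp
      then have "(\<lambda>n. a (n + M)) \<longlonglongrightarrow> 0"
        by (rule Lim_null_comparison[rotated]) (use geo az in \<open>auto simp: add.commute\<close>)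
      then have "a \<longlonglongrightarrow> 0" by (rule LIMSEQ_offset)
      then have "(a \<circ> s) \<longlonglongrightarrow> 0" using s_mono by (rule LIMSEQ_subseq_LIMSEQ)
      then show ?thesis unfolding comp_def az by (simp add: tendsto_norm_zero_iff)
    next
      case False
      have inf: "\<exists>k\<ge>N. \<rho> (Suc k) = \<beta> * \<rho> k" for N
      proof -
        obtain k where k: "k \<ge> N" "\<not> (k = 0 \<or> a k \<le> \<eta> * a (k - 1))" using False by blast
        have kk: "Suc (k - 1) = k" using k(2) by simp
        have "\<rho> (Suc k) = \<beta> * \<rho> k" using rho_update[of k] k(2) unfolding a_def kk by simp
        then show ?thesis using k(1) by blast
      qed
      have big: "\<exists>K. \<forall>k\<ge>K. \<rho>0 * \<beta> ^ n \<le> \<rho> k" for n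
      proof (induction n)
        case 0 show ?case using incseqD[OF rho_inc] rho_init by (intro exI[of _ 0]) auto
      next
        case (Suc n)
        then obtain K where K: "\<And>k. k \<ge> K \<Longrightarrow> \<rho>0 * \<beta> ^ n \<le> \<rho> k" by blast
        obtain k where k: "k \<ge> K" "\<rho> (Suc k) = \<beta> * \<rho> k" using inf by blast
        have "\<rho>0 * \<beta> ^ Suc n \<le> \<rho> (Suc k)" using K[OF k(1)] k(2) beta_gt by simp
        then show ?case using incseqD[OF rho_inc] by (intro exI[of _ "Suc k"]) (meson order_trans)
      qed
      have rho_top: "filterlim \<rho> at_top sequentially"
        unfolding filterlim_at_top
      proof
        fix Z :: real
        obtain n where n: "Z / \<rho>0 < \<beta> ^ n" using real_arch_pow[OF beta_gt] by blast
        then have "Z \<le> \<rho>0 * \<beta> ^ n" using rho0_pos by (simp add: field_simps)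
        moreover obtain K where "\<forall>k\<ge>K. \<rho>0 * \<beta> ^ n \<le> \<rho> k" using big by blast
        ultimately show "eventually (\<lambda>k. Z \<le> \<rho> k) sequentially"
          unfolding eventually_sequentially by (meson order_trans)
      qed
      obtain B where B: "\<And>k. norm (u k) \<le> B" using U_bdd u_in unfolding bounded_iff by blast
      have "(\<lambda>k. B * inverse (\<rho> k)) \<longlonglongrightarrow> 0"
        by (intro tendsto_mult_right_zero tendsto_inverse_0_at_top rho_top)
      then have uz: "(\<lambda>k. (1 / \<rho> k) *\<^sub>R u k) \<longlonglongrightarrow> 0"
      proof (rule Lim_null_comparison[rotated], intro always_eventually allI)
        fix k
        have "norm ((1 / \<rho> k) *\<^sub>R u k) = inverse (\<rho> k) * norm (u k)" using rho_pos[of k] by (simp add: divide_inverse mult.commute)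
        also have "\<dots> \<le> inverse (\<rho> k) * B" using B[of k] rho_pos[of k] by (intro mult_left_mono) auto
        finally show "norm ((1 / \<rho> k) *\<^sub>R u k) \<le> B * inverse (\<rho> k)" by (simp add: mult.commute)
      qed
      have Gc: "continuous_on UNIV G"
        using G_deriv by (meson continuous_at_imp_continuous_on has_derivative_continuous)
      have Gs: "(\<lambda>j. G (w (Suc (s j)))) \<longlonglongrightarrow> G wb"
        using continuous_on_tendsto_compose[OF Gc ws] by simp
      have ys: "(\<lambda>j. G (w (Suc (s j))) + (1 / \<rho> (s j)) *\<^sub>R u (s j)) \<longlonglongrightarrow> G wb"
        using tendsto_add[OF Gs LIMSEQ_subseq_LIMSEQ[OF uz s_mono]] by (simp add: comp_def)
      have "(\<lambda>j. closest_point C (G (w (Suc (s j))) + (1 / \<rho> (s j)) *\<^sub>R u (s j))) \<longlonglongrightarrow> closest_point C (G wb)"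
        using continuous_on_tendsto_compose[OF continuous_on_closest_point[OF C_convex C_closed C_ne, where t=UNIV] ys] by simp
      then have "(\<lambda>j. z (s j)) \<longlonglongrightarrow> G wb - closest_point C (G wb)"
        unfolding z_def using Gs by (intro tendsto_diff)
      then show ?thesis using closest_point_self[OF feas(1)] by simp
    qed
  qed
  have xs: "(\<lambda>j. eps (Suc (s j)) - Df (w (Suc (s j)))) \<longlonglongrightarrow> - Df wb"
    using tendsto_diff[OF epss Dfs] by simp
  have "- Df wb \<in> AM_map G DG C D wb 0"
    using AMreg[unfolded AM_regular_def, rule_format, of "\<lambda>j. w (Suc (s j))" "\<lambda>j. z (s j)"
        "\<lambda>j. eps (Suc (s j)) - Df (w (Suc (s j)))" "- Df wb"] ws zs xs inM by blast
  then obtain l v where lv: "- Df wb = adjoint (blinfun_apply (DG wb)) l + v"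
      "l \<in> normal_cone_cvx C (G wb)" "v \<in> lim_normal_cone D wb"
    unfolding AM_map_def by auto
  have "Df wb + adjoint (blinfun_apply (DG wb)) l + v = Df wb + (- Df wb)" using lv(1)
    by (simp add: add.assoc)
  then have "0 = Df wb + adjoint (blinfun_apply (DG wb)) l + v" by simp
  then show ?thesis using lv by (intro exI[of _ l]) auto
qed

end
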